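(* Let $X$ be a Banach space over $\mathbb R$ and let $\sum_n x_n$ be a series in $X$ which is not unconditionally convergent. Let $\mathcal I$ be an ideal on $\mathbb N$ with the Baire property. Then the set $$A(\mathcal I):=\left\{t \in \{0,1\}^{\mathbb N} \colon \sum_n t(n)x_n \text{ is } \mathcal I\text{-convergent}\right\}$$ is meager in $\{0,1\}^{\mathbb N}$.
   Context: $\mathbb N=\{1,2,\dots\}$. An ideal on $\mathbb N$ is a family $\mathcal I\subset\mathcal P(\mathbb N)$ closed under finite unions and subsets, with $\mathbb N\notin\mathcal I$ and containing all finite subsets of $\mathbb N$. Identifying subsets of $\mathbb N$ with their characteristic functions, $\mathcal I$ is regarded as a subset of the Cantor space $\{0,1\}^{\mathbb N}$ (product topology), and "$\mathcal I$ has the Baire property" refers to this subset. A sequence $(y_n)$ in a normed space is $\mathcal I$-convergent to $y$ if $\{n:\|y_n-y\|>\varepsilon\}\in\mathcal I$ for every $\varepsilon>0$; a series $\sum_n y_n$ is $\mathcal I$-convergent if the sequence of its partial sums $(\sum_{i=1}^n y_i)_n$ is $\mathcal I$-convergent to some element. A series $\sum_n x_n$ is unconditionally convergent if $\sum_n x_{p(n)}$ converges for every permutation $p$ of $\mathbb N$. *)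

theory Defs
  imports "HOL-Analysis.Analysis"
begin

text \<open>Natural numbers are indexed from 0 here (a harmless shift of the paper's 1,2,...).
  The Cantor space is the type nat \<Rightarrow> bool with its product topology
  (bool is discrete; Function_Topology provides the product topology on functions).\<close>

definition nowhere_dense :: "'a::topological_space set \<Rightarrow> bool" where
  "nowhere_dense S \<longleftrightarrow> interior (closure S) = {}"

definition meager :: "'a::topological_space set \<Rightarrow> bool" where
  "meager S \<longleftrightarrow> (\<exists>F. countable F \<and> (\<forall>N\<in>F. nowhere_dense N) \<and> S \<subseteq> \<Union>F)"

definition baire_property :: "'a::topological_space set \<Rightarrow> bool" where
  "baire_property S \<longleftrightarrow> (\<exists>U. open U \<and> meager ((S - U) \<union> (U - S)))"

definition ideal_on_nat :: "nat set set \<Rightarrow> bool" where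
  "ideal_on_nat I \<longleftrightarrow>
     (\<forall>A\<in>I. \<forall>B\<in>I. A \<union> B \<in> I) \<and>
     (\<forall>A\<in>I. \<forall>B. B \<subseteq> A \<longrightarrow> B \<in> I) \<and>
     UNIV \<notin> I \<and>
     (\<forall>A. finite A \<longrightarrow> A \<in> I)"

definition ideal_as_cantor :: "nat set set \<Rightarrow> (nat \<Rightarrow> bool) set" where
  "ideal_as_cantor I = (\<lambda>A. (\<lambda>n. n \<in> A)) ` I"

definition I_convergent_to :: "nat set set \<Rightarrow> (nat \<Rightarrow> 'a::real_normed_vector) \<Rightarrow> 'a \<Rightarrow> bool" where
  "I_convergent_to I y L \<longleftrightarrow> (\<forall>\<epsilon>>0. {n. norm (y n - L) > \<epsilon>} \<in> I)"

definition I_convergent_series :: "nat set set \<Rightarrow> (nat \<Rightarrow> 'a::real_normed_vector) \<Rightarrow> bool" where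
  "I_convergent_series I y \<longleftrightarrow> (\<exists>L. I_convergent_to I (\<lambda>n. \<Sum>i\<le>n. y i) L)"

definition unconditionally_convergent :: "(nat \<Rightarrow> 'a::real_normed_vector) \<Rightarrow> bool" where
  "unconditionally_convergent x \<longleftrightarrow> (\<forall>p. bij p \<longrightarrow> summable (\<lambda>n. x (p n)))"

end

theory Submission
  imports Defs
begin

definition cyl :: "bool list \<Rightarrow> (nat \<Rightarrow> bool) set" where
  "cyl s = {f. \<forall>i<length s. f i = s!i}"

definition avoid :: "(nat \<Rightarrow> bool) set \<Rightarrow> bool" where
  "avoid S \<longleftrightarrow> (\<forall>s. \<exists>u. cyl (s@u) \<inter> S = {})"

lemma open_cyl: "open (cyl s)"
proof -
  have "cyl s = {f. \<forall>i\<in>{..<length s}. f (id i) \<in> {s!i}}"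
    unfolding cyl_def by auto
  moreover have "open {f::nat\<Rightarrow>bool. \<forall>i\<in>{..<length s}. f (id i) \<in> {s!i}}"
    by (rule product_topology_basis') (auto intro: open_discrete)
  ultimately show ?thesis by simp
qed

lemma cyl_map: "cyl (map t [0..<n]) = {f. \<forall>i<n. f i = t i}"
  unfolding cyl_def by auto

lemma cyl_app: "cyl (s@u) \<subseteq> cyl s"
  unfolding cyl_def by (auto simp: nth_append)

lemma cyl_nonempty: "(\<lambda>i. if i < length s then s!i else False) \<in> cyl s"
  unfolding cyl_def by auto

lemma cyl_nbhd:
  assumes "open U" "t \<in> U"
  shows "\<exists>n. cyl (map t [0..<n]) \<subseteq> U"
proof -
  have "openin (product_topology (\<lambda>i. euclidean) UNIV) U"
    using assms unfolding open_fun_def by auto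
  from product_topology_open_contains_basis[OF this assms(2)]
  obtain X where H: "t \<in> (\<Pi>\<^sub>E i\<in>UNIV. X i)" "finite {i. X i \<noteq> topspace euclidean}"
      "(\<Pi>\<^sub>E i\<in>UNIV. X i) \<subseteq> U" by auto
  then have fin: "finite {i. X i \<noteq> UNIV}" by simp
  obtain n where n: "\<forall>i\<in>{i. X i \<noteq> UNIV}. i < n"
    using fin finite_nat_set_iff_bounded by blast
  have "cyl (map t [0..<n]) \<subseteq> (\<Pi>\<^sub>E i\<in>UNIV. X i)"
  proof
    fix f assume f: "f \<in> cyl (map t [0..<n])"
    have "f i \<in> X i" for i
    proof (cases "X i = UNIV")
      case False
      then have "i < n" using n by auto
      then have "f i = t i" using f by (auto simp: cyl_map)
      then show ?thesis using H(1) by auto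
    qed auto
    then show "f \<in> (\<Pi>\<^sub>E i\<in>UNIV. X i)" by auto
  qed
  then show ?thesis using H(3) by blast
qed

lemma nwd_avoid:
  assumes "nowhere_dense S" shows "avoid S"
  unfolding avoid_def
proof
  fix s
  have "\<not> cyl s \<subseteq> closure S"
  proof
    assume "cyl s \<subseteq> closure S"
    then have "cyl s \<subseteq> interior (closure S)" using open_cyl interior_maximal by blast
    then show False using assms cyl_nonempty[of s] unfolding nowhere_dense_def by blast
  qed
  then obtain t where t: "t \<in> cyl s" "t \<notin> closure S" by blast
  obtain n where n: "cyl (map t [0..<n]) \<subseteq> - closure S"
    using cyl_nbhd[of "- closure S" t] t by auto
  define n' where "n' = max n (length s)"
  define u where "u = map t [length s..<n']"
  have "cyl (s@u) \<subseteq> cyl (map t [0..<n])"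
  proof
    fix f assume f: "f \<in> cyl (s@u)"
    have "f i = t i" if "i < n" for i
    proof (cases "i < length s")
      case True
      then show ?thesis using f t(1) unfolding cyl_def by (auto simp: nth_append)
    next
      case False
      then have "i < length (s@u)" using that by (simp add: u_def n'_def)
      then have "f i = (s@u)!i" using f unfolding cyl_def by auto
      also have "\<dots> = t i" using False that by (simp add: nth_append u_def n'_def)
      finally show ?thesis .
    qed
    then show "f \<in> cyl (map t [0..<n])" by (simp add: cyl_map)
  qed
  then show "\<exists>u. cyl (s@u) \<inter> S = {}" using n closure_subset by blast
qed

lemma avoid_nwd:
  assumes "avoid S" shows "nowhere_dense S"
  unfolding nowhere_dense_def
proof (rule ccontr)
  assume "interior (closure S) \<noteq> {}"
  then obtain t where t: "t \<in> interior (closure S)" by blast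
  obtain n where n: "cyl (map t [0..<n]) \<subseteq> interior (closure S)"
    using cyl_nbhd[OF open_interior t] by auto
  obtain u where u: "cyl (map t [0..<n] @ u) \<inter> S = {}" using assms unfolding avoid_def by blast
  let ?c = "cyl (map t [0..<n] @ u)"
  have "?c \<subseteq> closure S" using n cyl_app interior_subset by blast
  moreover have "?c \<inter> closure S = {}" using u open_Int_closure_eq_empty open_cyl by blast
  ultimately show False using cyl_nonempty by blast
qed

lemma avoid_Un: "avoid S \<Longrightarrow> avoid T \<Longrightarrow> avoid (S \<union> T)"
  unfolding avoid_def
proof
  fix s assume S: "\<forall>s. \<exists>u. cyl (s @ u) \<inter> S = {}" and T: "\<forall>s. \<exists>u. cyl (s @ u) \<inter> T = {}"
  obtain u1 where u1: "cyl (s @ u1) \<inter> S = {}" using S by blast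
  obtain u2 where u2: "cyl ((s @ u1) @ u2) \<inter> T = {}" using T by blast
  have "cyl (s @ (u1 @ u2)) \<inter> (S \<union> T) = {}" using u1 u2 cyl_app[of "s@u1" u2] by auto
  then show "\<exists>u. cyl (s @ u) \<inter> (S \<union> T) = {}" by blast
qed

lemma avoid_empty: "avoid {}" unfolding avoid_def by auto

lemma avoid_subset: "avoid S \<Longrightarrow> T \<subseteq> S \<Longrightarrow> avoid T" unfolding avoid_def by blast

lemma avoid_nonempty: "avoid S \<Longrightarrow> \<exists>u. u \<noteq> [] \<and> cyl (s@u) \<inter> S = {}"
proof -
  assume "avoid S"
  then obtain u where "cyl (s@u) \<inter> S = {}" unfolding avoid_def by blast
  moreover have "cyl (s@(u@[False])) \<subseteq> cyl (s@u)" using cyl_app[of "s@u" "[False]"] by simp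
  ultimately show ?thesis by (intro exI[of _ "u@[False]"]) auto
qed

lemma meager_iff: "meager S \<longleftrightarrow> (\<exists>F. countable F \<and> (\<forall>N\<in>F. avoid N) \<and> S \<subseteq> \<Union>F)"
  unfolding meager_def using nwd_avoid avoid_nwd by metis

primrec bseq :: "(nat \<Rightarrow> (nat\<Rightarrow>bool) set) \<Rightarrow> nat \<Rightarrow> bool list" where
  "bseq g 0 = []"
| "bseq g (Suc j) = bseq g j @ (SOME u. u \<noteq> [] \<and> cyl (bseq g j @ u) \<inter> g j = {})"

lemma baire_seq:
  fixes g :: "nat \<Rightarrow> (nat\<Rightarrow>bool) set"
  assumes av: "\<And>j. avoid (g j)"
  shows "\<exists>t. \<forall>j. t \<notin> g j"
proof -
  have P: "(SOME u. u \<noteq> [] \<and> cyl (bseq g j @ u) \<inter> g j = {}) \<noteq> [] \<and>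
           cyl (bseq g j @ (SOME u. u \<noteq> [] \<and> cyl (bseq g j @ u) \<inter> g j = {})) \<inter> g j = {}" for j
    by (rule someI_ex) (rule avoid_nonempty[OF av])
  have len: "j \<le> length (bseq g j)" for j
  proof (induction j)
    case (Suc j) then show ?case using P[of j] by (cases "(SOME u. u \<noteq> [] \<and> cyl (bseq g j @ u) \<inter> g j = {})") auto
  qed simp
  have pre: "\<exists>w. bseq g k = bseq g j @ w" if "j \<le> k" for j k
    using that
  proof (induction k rule: dec_induct)
    case base then show ?case by auto
  next
    case (step k) then show ?case by auto
  qed
  have avs: "cyl (bseq g (Suc j)) \<inter> g j = {}" for j using P[of j] by simp
  define t where "t i = bseq g (Suc i) ! i" for i
  have tc: "t \<in> cyl (bseq g j)" for j
    unfolding cyl_def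
  proof (intro CollectI allI impI)
    fix i assume i: "i < length (bseq g j)"
    define k where "k = max (Suc i) j"
    obtain w1 where w1: "bseq g k = bseq g (Suc i) @ w1" using pre[of "Suc i" k] k_def by auto
    obtain w2 where w2: "bseq g k = bseq g j @ w2" using pre[of j k] k_def by auto
    have "i < length (bseq g (Suc i))" using len[of "Suc i"] by simp
    then have "bseq g k ! i = t i" unfolding t_def w1 by (simp add: nth_append del: bseq.simps)
    moreover have "bseq g k ! i = bseq g j ! i" using i unfolding w2 by (simp add: nth_append)
    ultimately show "t i = bseq g j ! i" by simp
  qed
  show ?thesis using tc avs by blast
qed

lemma baire:
  assumes "countable F" "\<forall>N\<in>F. avoid N"
  shows "\<exists>t. t \<notin> \<Union>F"
proof (cases "F = {}")
  case False
  define g where "g = from_nat_into F"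
  have rg: "range g = F" using range_from_nat_into[OF False assms(1)] g_def by simp
  have "avoid (g j)" for j using assms(2) rg by auto
  then obtain t where "\<forall>j. t \<notin> g j" using baire_seq by blast
  then show ?thesis using rg by auto
qed auto

lemma cyl_not: "f \<in> cyl w \<Longrightarrow> (\<lambda>i. \<not> f i) \<in> cyl (map Not w)"
  unfolding cyl_def by auto

lemma avoid_vimage_not:
  assumes "avoid N" shows "avoid ((\<lambda>t i. \<not> t i) -` N)"
  unfolding avoid_def
proof
  fix s
  obtain u where u: "cyl (map Not s @ u) \<inter> N = {}" using assms unfolding avoid_def by blast
  have "cyl (s @ map Not u) \<inter> (\<lambda>t i. \<not> t i) -` N = {}"
  proof (rule ccontr)
    assume "cyl (s @ map Not u) \<inter> (\<lambda>t i. \<not> t i) -` N \<noteq> {}"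
    then obtain f where f: "f \<in> cyl (s @ map Not u)" "(\<lambda>i. \<not> f i) \<in> N" by blast
    have "(\<lambda>i. \<not> f i) \<in> cyl (map Not (s @ map Not u))" by (rule cyl_not[OF f(1)])
    then have "(\<lambda>i. \<not> f i) \<in> cyl (map Not s @ u)" by (simp add: comp_def)
    then show False using u f(2) by blast
  qed
  then show "\<exists>u. cyl (s @ u) \<inter> (\<lambda>t i. \<not> t i) -` N = {}" by blast
qed

definition repl :: "bool list \<Rightarrow> (nat \<Rightarrow> bool) \<Rightarrow> nat \<Rightarrow> bool" where
  "repl s0 t i = (if i < length s0 then s0!i else t i)"

lemma avoid_vimage_repl:
  assumes "avoid N" shows "avoid (repl s0 -` N)"
  unfolding avoid_def
proof
  fix s
  define m where "m = length s0"
  define s' where "s' = s @ replicate m False"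
  have ms: "m \<le> length s'" unfolding s'_def by simp
  obtain u where u: "cyl ((s0 @ drop m s') @ u) \<inter> N = {}" using assms unfolding avoid_def by blast
  have eq: "(s0 @ drop m s') @ u = s0 @ drop m (s' @ u)" using ms by simp
  have "cyl (s' @ u) \<inter> repl s0 -` N = {}"
  proof (rule ccontr)
    assume "cyl (s' @ u) \<inter> repl s0 -` N \<noteq> {}"
    then obtain f where f: "f \<in> cyl (s' @ u)" "repl s0 f \<in> N" by blast
    have "repl s0 f \<in> cyl (s0 @ drop m (s' @ u))"
      unfolding cyl_def
    proof (intro CollectI allI impI)
      fix i assume i: "i < length (s0 @ drop m (s' @ u))"
      show "repl s0 f i = (s0 @ drop m (s' @ u)) ! i"
      proof (cases "i < m")
        case True then show ?thesis by (simp add: repl_def m_def nth_append)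
      next
        case False
        then have i2: "i < length (s' @ u)" using i ms m_def by auto
        have "repl s0 f i = f i" using False by (simp add: repl_def m_def)
        also have "\<dots> = (s' @ u) ! i" using f(1) i2 unfolding cyl_def by auto
        also have "\<dots> = drop m (s' @ u) ! (i - m)"
          using False ms i2 nth_drop[of m "s'@u" "i-m"] by (simp del: drop_append)
        also have "\<dots> = (s0 @ drop m (s' @ u)) ! i"
          using False by (simp add: nth_append m_def del: drop_append)
        finally show ?thesis .
      qed
    qed
    then show False using u f(2) eq by auto
  qed
  then have "cyl (s @ (replicate m False @ u)) \<inter> repl s0 -` N = {}" by (simp add: s'_def)
  then show "\<exists>u. cyl (s @ u) \<inter> repl s0 -` N = {}" by blast
qed

lemma meager_mono: "meager S \<Longrightarrow> T \<subseteq> S \<Longrightarrow> meager T"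
proof -
  assume "meager S" "T \<subseteq> S"
  then obtain F where "countable F" "\<forall>N\<in>F. nowhere_dense N" "S \<subseteq> \<Union>F" unfolding meager_def by blast
  then show "meager T" unfolding meager_def using \<open>T \<subseteq> S\<close> by (intro exI[of _ F]) auto
qed

lemma ideal_meager:
  assumes I: "ideal_on_nat I" and bp: "baire_property (ideal_as_cantor I)"
  shows "meager (ideal_as_cantor I)"
proof -
  let ?Ic = "ideal_as_cantor I"
  obtain U where U: "open U" "meager ((?Ic - U) \<union> (U - ?Ic))"
    using bp unfolding baire_property_def by blast
  show ?thesis
  proof (cases "U = {}")
    case True then show ?thesis using meager_mono[OF U(2)] by auto
  next
    case False
    then obtain t0 where "t0 \<in> U" by blast
    then obtain n where n: "cyl (map t0 [0..<n]) \<subseteq> U" using cyl_nbhd U(1) by blast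
    define s0 where "s0 = map t0 [0..<n]"
    have "cyl s0 - ?Ic \<subseteq> (?Ic - U) \<union> (U - ?Ic)" using n s0_def by auto
    then have "meager (cyl s0 - ?Ic)" using meager_mono[OF U(2)] by blast
    then obtain F where F: "countable F" "\<forall>N\<in>F. avoid N" "cyl s0 - ?Ic \<subseteq> \<Union>F"
      unfolding meager_iff by blast
    define G where "G = (\<lambda>N. repl s0 -` N) ` F \<union> (\<lambda>N. (\<lambda>t i. \<not> t i) -` (repl s0 -` N)) ` F"
    have "countable G" unfolding G_def using F(1) by auto
    moreover have "\<forall>N\<in>G. avoid N" unfolding G_def using F(2) avoid_vimage_repl avoid_vimage_not by auto
    ultimately obtain t where t: "t \<notin> \<Union>G" using baire by blast
    have rc: "repl s0 f \<in> cyl s0" for f unfolding cyl_def repl_def by auto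
    have key: "repl s0 f \<notin> \<Union>F \<Longrightarrow> \<exists>A\<in>I. {i. f i} \<subseteq> A \<union> {..<length s0}" for f
    proof -
      assume "repl s0 f \<notin> \<Union>F"
      then have "repl s0 f \<in> ?Ic" using F(3) rc by blast
      then obtain A where A: "A \<in> I" "repl s0 f = (\<lambda>n. n \<in> A)" unfolding ideal_as_cantor_def by blast
      have "{i. f i} \<subseteq> A \<union> {..<length s0}"
      proof
        fix i assume "i \<in> {i. f i}"
        then show "i \<in> A \<union> {..<length s0}" using fun_cong[OF A(2), of i] by (auto simp: repl_def split: if_splits)
      qed
      then show ?thesis using A(1) by blast
    qed
    have t1: "repl s0 t \<notin> \<Union>F"
    proof
      assume "repl s0 t \<in> \<Union>F"
      then obtain N where "N \<in> F" "repl s0 t \<in> N" by blast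
      then have "t \<in> repl s0 -` N" "repl s0 -` N \<in> G" unfolding G_def by auto
      then show False using t by blast
    qed
    have t2: "repl s0 (\<lambda>i. \<not> t i) \<notin> \<Union>F"
    proof
      assume "repl s0 (\<lambda>i. \<not> t i) \<in> \<Union>F"
      then obtain N where "N \<in> F" "repl s0 (\<lambda>i. \<not> t i) \<in> N" by blast
      then have "t \<in> (\<lambda>t i. \<not> t i) -` (repl s0 -` N)" "(\<lambda>t i. \<not> t i) -` (repl s0 -` N) \<in> G"
        unfolding G_def by auto
      then show False using t by blast
    qed
    obtain A where A: "A \<in> I" "{i. t i} \<subseteq> A \<union> {..<length s0}"
      using key[OF t1] by blast
    obtain B where B: "B \<in> I" "{i. \<not> t i} \<subseteq> B \<union> {..<length s0}"
      using key[OF t2] by auto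
    have fin: "{..<length s0} \<in> I" using I unfolding ideal_on_nat_def by auto
    have un: "\<And>X Y. X \<in> I \<Longrightarrow> Y \<in> I \<Longrightarrow> X \<union> Y \<in> I" using I unfolding ideal_on_nat_def by blast
    have sb: "\<And>X Y. X \<in> I \<Longrightarrow> Y \<subseteq> X \<Longrightarrow> Y \<in> I" using I unfolding ideal_on_nat_def by blast
    have "A \<union> B \<union> {..<length s0} \<in> I" using A(1) B(1) fin un by metis
    moreover have "UNIV \<subseteq> A \<union> B \<union> {..<length s0}" using A(2) B(2) by blast
    ultimately have "UNIV \<in> I" using sb by metis
    then show ?thesis using I unfolding ideal_on_nat_def by simp
  qed
qed

lemma stage_fin:
  assumes "avoid N" "finite U"
  shows "\<exists>v. \<forall>u\<in>U. cyl (u@v) \<inter> N = {}"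
  using assms(2)
proof (induction U rule: finite_induct)
  case empty then show ?case by auto
next
  case (insert u0 U)
  then obtain v where v: "\<forall>u\<in>U. cyl (u@v) \<inter> N = {}" by blast
  obtain w where w: "cyl ((u0@v)@w) \<inter> N = {}" using assms(1) unfolding avoid_def by blast
  have "\<forall>u\<in>insert u0 U. cyl (u@(v@w)) \<inter> N = {}"
  proof
    fix u assume "u \<in> insert u0 U"
    then show "cyl (u@(v@w)) \<inter> N = {}"
    proof
      assume "u = u0" then show ?thesis using w by simp
    next
      assume "u \<in> U"
      then have "cyl (u@v) \<inter> N = {}" using v by blast
      moreover have "cyl ((u@v)@w) \<subseteq> cyl (u@v)" by (rule cyl_app)
      ultimately show ?thesis by auto
    qed
  qed
  then show ?case by blast
qed

lemma stage:
  assumes "avoid N"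
  shows "\<exists>v. v \<noteq> [] \<and> (\<forall>u. length u = n \<longrightarrow> cyl (u@v) \<inter> N = {})"
proof -
  have fin: "finite {u::bool list. length u = n}"
    using finite_lists_length_eq[of "UNIV::bool set" n] by simp
  obtain v where v: "\<forall>u\<in>{u::bool list. length u = n}. cyl (u@v) \<inter> N = {}"
    using stage_fin[OF assms fin] by blast
  have "\<forall>u. length u = n \<longrightarrow> cyl (u@(v@[False])) \<inter> N = {}"
  proof (intro allI impI)
    fix u :: "bool list" assume "length u = n"
    then have "cyl (u@v) \<inter> N = {}" using v by blast
    moreover have "cyl ((u@v)@[False]) \<subseteq> cyl (u@v)" by (rule cyl_app)
    ultimately show "cyl (u@(v@[False])) \<inter> N = {}" by auto
  qed
  then show ?thesis by (intro exI[of _ "v@[False]"]) auto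
qed

definition ext :: "(nat\<Rightarrow>bool) set \<Rightarrow> nat \<Rightarrow> bool list" where
  "ext N n = (SOME v. v \<noteq> [] \<and> (\<forall>u. length u = n \<longrightarrow> cyl (u@v) \<inter> N = {}))"

primrec nseq :: "(nat \<Rightarrow> (nat\<Rightarrow>bool) set) \<Rightarrow> nat \<Rightarrow> nat" where
  "nseq N 0 = 0"
| "nseq N (Suc k) = nseq N k + length (ext (N k) (nseq N k))"

lemma talagrand:
  assumes I: "ideal_on_nat I" and M: "meager (ideal_as_cantor I)"
  shows "\<exists>P::nat \<Rightarrow> nat set. (\<forall>k. finite (P k) \<and> (\<forall>i\<in>P k. k \<le> i)) \<and>
            (\<forall>A\<in>I. finite {k. P k \<subseteq> A})"
proof -
  obtain F where F: "countable F" "\<forall>N\<in>F. avoid N" "ideal_as_cantor I \<subseteq> \<Union>F"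
    using M unfolding meager_iff by blast
  define F' where "F' = insert {} F"
  define g where "g = from_nat_into F'"
  have rg: "range g = F'" unfolding g_def F'_def
    by (rule range_from_nat_into) (use F(1) in auto)
  have avg: "avoid (g j)" for j
  proof -
    have "g j \<in> F'" using rg by auto
    then show ?thesis using F(2) avoid_empty unfolding F'_def by auto
  qed
  define N where "N k = (\<Union>j\<in>{..k}. g j)" for k
  have avN: "avoid (N k)" for k
  proof (induction k)
    case 0 then show ?case using avg[of 0] by (simp add: N_def)
  next
    case (Suc k)
    have "N (Suc k) = g (Suc k) \<union> N k" unfolding N_def by (auto simp: atMost_Suc)
    then show ?case using avoid_Un[OF avg Suc] by simp
  qed
  have gN: "j \<le> k \<Longrightarrow> g j \<subseteq> N k" for j k unfolding N_def by auto
  define nk where "nk = nseq N"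
  define v where "v k = ext (N k) (nk k)" for k
  have vP: "v k \<noteq> [] \<and> (\<forall>u. length u = nk k \<longrightarrow> cyl (u@v k) \<inter> N k = {})" for k
    unfolding v_def ext_def by (rule someI_ex) (rule stage[OF avN])
  have nkS: "nk (Suc k) = nk k + length (v k)" for k unfolding nk_def v_def by simp
  have nkl: "nk k < nk (Suc k)" for k using nkS vP[of k] by simp
  have mono_nk: "mono nk" unfolding mono_iff_le_Suc using nkl less_imp_le by blast
  have nk_ge: "k \<le> nk k" for k
  proof (induction k)
    case (Suc k) then show ?case using nkl[of k] by simp
  qed simp
  define P where "P k = {i. nk k \<le> i \<and> i < nk (Suc k) \<and> v k ! (i - nk k)}" for k
  have Pfin: "finite (P k)" for k
    by (rule finite_subset[of _ "{..<nk (Suc k)}"]) (auto simp: P_def)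
  have Pge: "\<forall>i\<in>P k. k \<le> i" for k using nk_ge[of k] by (auto simp: P_def)
  have Pint: "i \<in> P k' \<Longrightarrow> nk k \<le> i \<Longrightarrow> i < nk (Suc k) \<Longrightarrow> k' = k" for i k k'
  proof (rule ccontr)
    assume i: "i \<in> P k'" "nk k \<le> i" "i < nk (Suc k)" "k' \<noteq> k"
    show False
    proof (cases "k' < k")
      case True
      then have "nk (Suc k') \<le> nk k" using mono_nk by (simp add: monoD)
      then show False using i unfolding P_def by auto
    next
      case False
      then have "Suc k \<le> k'" using i(4) by simp
      then have "nk (Suc k) \<le> nk k'" using mono_nk by (simp add: monoD)
      then show False using i unfolding P_def by auto
    qed
  qed
  have fin: "finite {k. P k \<subseteq> A}" if A: "A \<in> I" for A
  proof (rule ccontr)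
    assume inf: "infinite {k. P k \<subseteq> A}"
    define K where "K = {k. P k \<subseteq> A}"
    define B where "B = (\<Union>k\<in>K. P k)"
    have "B \<subseteq> A" unfolding B_def K_def by auto
    then have "B \<in> I" using I A unfolding ideal_on_nat_def by blast
    then have "(\<lambda>i. i \<in> B) \<in> ideal_as_cantor I" unfolding ideal_as_cantor_def by blast
    then have "(\<lambda>i. i \<in> B) \<in> \<Union>F" using F(3) by blast
    then obtain j where j: "(\<lambda>i. i \<in> B) \<in> g j" using rg unfolding F'_def by auto
    obtain k where k: "k \<in> K" "j \<le> k" using inf unfolding K_def infinite_nat_iff_unbounded_le by blast
    define u where "u = map (\<lambda>i. i \<in> B) [0..<nk k]"
    have "cyl (u @ v k) \<inter> N k = {}" using vP[of k] u_def by simp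
    moreover have "(\<lambda>i. i \<in> B) \<in> N k" using j gN[OF k(2)] by blast
    moreover have "(\<lambda>i. i \<in> B) \<in> cyl (u @ v k)"
      unfolding cyl_def
    proof (intro CollectI allI impI)
      fix i assume i: "i < length (u @ v k)"
      show "(i \<in> B) = (u @ v k) ! i"
      proof (cases "i < nk k")
        case True then show ?thesis by (simp add: u_def nth_append)
      next
        case False
        have eq: "(u @ v k) ! i = v k ! (i - nk k)" using False by (simp add: u_def nth_append)
        have ilt: "i < nk (Suc k)" using i nkS[of k] by (simp add: u_def)
        show ?thesis
        proof
          assume "i \<in> B"
          then obtain k' where "k' \<in> K" "i \<in> P k'" unfolding B_def by blast
          moreover then have "k' = k" using Pint False ilt by simp
          ultimately show "(u @ v k) ! i" using eq unfolding P_def by simp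
        next
          assume "(u @ v k) ! i"
          then have "i \<in> P k" using eq False ilt unfolding P_def by simp
          then show "i \<in> B" using k(1) unfolding B_def by blast
        qed
      qed
    qed
    ultimately show False by blast
  qed
  show ?thesis
    by (intro exI[of _ P]) (use Pfin Pge fin in auto)
qed

lemma not_uc:
  fixes x :: "nat \<Rightarrow> 'a::banach"
  assumes "\<not> unconditionally_convergent x"
  shows "\<exists>\<delta>>0. \<forall>N. \<exists>F. finite F \<and> (\<forall>i\<in>F. N \<le> i) \<and> \<delta> < norm (\<Sum>i\<in>F. x i)"
proof (rule ccontr)
  assume H: "\<not> ?thesis"
  have H': "\<exists>N. \<forall>F. finite F \<and> (\<forall>i\<in>F. N \<le> i) \<longrightarrow> norm (\<Sum>i\<in>F. x i) \<le> \<delta>" if "\<delta> > 0" for \<delta>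
    using H that by (meson not_le)
  have "summable (\<lambda>n. x (p n))" if p: "bij p" for p
    unfolding summable_Cauchy
  proof (intro allI impI)
    fix e :: real assume e: "e > 0"
    obtain N where N: "\<forall>F. finite F \<and> (\<forall>i\<in>F. N \<le> i) \<longrightarrow> norm (\<Sum>i\<in>F. x i) \<le> e/2"
      using H'[of "e/2"] e by auto
    have fin: "finite (p -` {..<N})" using finite_vimageI[of "{..<N}" p] bij_is_inj[OF p] by simp
    obtain M where M: "\<forall>j\<in>p -` {..<N}. j < M" using fin finite_nat_set_iff_bounded by blast
    show "\<exists>M. \<forall>m\<ge>M. \<forall>n. norm (sum (\<lambda>n. x (p n)) {m..<n}) < e"
    proof (intro exI[of _ M] allI impI)
      fix m n assume m: "M \<le> m"
      have inj: "inj_on p {m..<n}" using bij_is_inj[OF p] inj_on_subset by blast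
      have "sum (\<lambda>n. x (p n)) {m..<n} = sum x (p ` {m..<n})"
        using sum.reindex[OF inj, of x] by (simp add: comp_def)
      moreover have "\<forall>i\<in>p ` {m..<n}. N \<le> i"
      proof
        fix i assume "i \<in> p ` {m..<n}"
        then obtain j where j: "j \<in> {m..<n}" "i = p j" by blast
        show "N \<le> i"
        proof (rule ccontr)
          assume "\<not> N \<le> i"
          then have "j \<in> p -` {..<N}" using j by simp
          then have "j < M" using M by blast
          then show False using m j(1) by simp
        qed
      qed
      ultimately have "norm (sum (\<lambda>n. x (p n)) {m..<n}) \<le> e/2" using N by auto
      then show "norm (sum (\<lambda>n. x (p n)) {m..<n}) < e" using e by simp
    qed
  qed
  then have "unconditionally_convergent x" unfolding unconditionally_convergent_def by blast
  with assms show False by simp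
qed

lemma sumS:
  fixes x :: "nat \<Rightarrow> 'a::real_normed_vector"
  shows "(\<Sum>i\<le>n. of_bool (t i) *\<^sub>R x i) = (\<Sum>i\<in>{i. i\<le>n \<and> t i}. x i)"
proof -
  have "{i. i\<le>n \<and> t i} = {i\<in>{..n}. t i}" by auto
  moreover have "(\<Sum>i\<in>{i\<in>{..n}. t i}. x i) = (\<Sum>i\<le>n. if t i then x i else 0)"
    by (rule sum.inter_filter) simp
  ultimately have "(\<Sum>i\<in>{i. i\<le>n \<and> t i}. x i) = (\<Sum>i\<le>n. if t i then x i else 0)"
    by simp
  moreover have "(\<Sum>i\<le>n. of_bool (t i) *\<^sub>R x i) = (\<Sum>i\<le>n. if t i then x i else 0)"
    by (rule sum.cong) auto
  ultimately show ?thesis by simp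
qed

theorem theorem3p2:
  fixes x :: "nat \<Rightarrow> 'a::banach" and I :: "nat set set"
  assumes "\<not> unconditionally_convergent x"
    and "ideal_on_nat I"
    and "baire_property (ideal_as_cantor I)"
  shows "meager {t :: nat \<Rightarrow> bool. I_convergent_series I (\<lambda>n. of_bool (t n) *\<^sub>R x n)}"
proof -
  obtain \<delta> where d: "\<delta> > 0" "\<forall>N. \<exists>F. finite F \<and> (\<forall>i\<in>F. N \<le> i) \<and> \<delta> < norm (\<Sum>i\<in>F. x i)"
    using not_uc[OF assms(1)] by blast
  obtain P :: "nat \<Rightarrow> nat set" where P: "\<forall>k. finite (P k) \<and> (\<forall>i\<in>P k. k \<le> i)"
      "\<forall>A\<in>I. finite {k. P k \<subseteq> A}"
    using talagrand[OF assms(2) ideal_meager[OF assms(2,3)]] by blast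
  define S where "S t n = (\<Sum>i\<le>n. of_bool (t i) *\<^sub>R x i)" for t :: "nat \<Rightarrow> bool" and n
  define Cl where "Cl k0 = {t. \<forall>k\<ge>k0. \<forall>k'\<ge>k0. \<exists>a\<in>P k. \<exists>b\<in>P k'. norm (S t a - S t b) \<le> \<delta>/2}" for k0
  have sub: "{t :: nat \<Rightarrow> bool. I_convergent_series I (\<lambda>n. of_bool (t n) *\<^sub>R x n)} \<subseteq> \<Union>(range Cl)"
  proof
    fix t :: "nat \<Rightarrow> bool"
    assume "t \<in> {t. I_convergent_series I (\<lambda>n. of_bool (t n) *\<^sub>R x n)}"
    then obtain L where L: "I_convergent_to I (S t) L"
      unfolding I_convergent_series_def S_def by auto
    define Z where "Z = {n. norm (S t n - L) > \<delta>/4}"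
    have d4: "\<delta>/4 > 0" using d(1) by simp
    have "Z \<in> I" using L d4 unfolding I_convergent_to_def Z_def by blast
    then have "finite {k. P k \<subseteq> Z}" using P(2) by blast
    then obtain k0 where k0: "\<forall>k\<in>{k. P k \<subseteq> Z}. k < k0" using finite_nat_set_iff_bounded by blast
    have near: "\<exists>a\<in>P k. norm (S t a - L) \<le> \<delta>/4" if "k \<ge> k0" for k
    proof -
      have "\<not> P k \<subseteq> Z" using k0 that by auto
      then obtain a where "a \<in> P k" "a \<notin> Z" by blast
      then show ?thesis unfolding Z_def by (auto simp: not_less)
    qed
    have "t \<in> Cl k0"
      unfolding Cl_def
    proof (intro CollectI allI impI)
      fix k k' assume kk: "k0 \<le> k" "k0 \<le> k'"
      obtain a where a: "a \<in> P k" "norm (S t a - L) \<le> \<delta>/4" using near kk(1) by blast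
      obtain b where b: "b \<in> P k'" "norm (S t b - L) \<le> \<delta>/4" using near kk(2) by blast
      have "S t a - S t b = (S t a - L) - (S t b - L)" by simp
      then have "norm (S t a - S t b) \<le> norm (S t a - L) + norm (S t b - L)"
        by (metis norm_triangle_ineq4)
      then have "norm (S t a - S t b) \<le> \<delta>/2" using a(2) b(2) by simp
      then show "\<exists>a\<in>P k. \<exists>b\<in>P k'. norm (S t a - S t b) \<le> \<delta>/2" using a(1) b(1) by blast
    qed
    then show "t \<in> \<Union>(range Cl)" by blast
  qed
  have av: "avoid (Cl k0)" for k0
    unfolding avoid_def
  proof
    fix s :: "bool list"
    define m where "m = length s"
    define k where "k = max k0 m"
    define M1 where "M1 = Suc (Max (insert m (P k)))"
    have M1: "m < M1" "\<forall>a\<in>P k. a < M1"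
      using P(1) unfolding M1_def by (auto simp: le_imp_less_Suc)
    obtain F where F: "finite F" "\<forall>i\<in>F. M1 \<le> i" "\<delta> < norm (\<Sum>i\<in>F. x i)" using d(2) by blast
    define M2 where "M2 = Suc (Max (insert M1 F))"
    have M2: "M1 < M2" "\<forall>i\<in>F. i < M2"
      using F(1) unfolding M2_def by (auto simp: le_imp_less_Suc)
    define k' where "k' = max k0 M2"
    define M3 where "M3 = Suc (Max (insert M2 (P k')))"
    have M3: "M2 < M3" "\<forall>b\<in>P k'. b < M3"
      using P(1) unfolding M3_def by (auto simp: le_imp_less_Suc)
    define t0 where "t0 i = (if i < m then s!i else i \<in> F)" for i
    define u where "u = map t0 [m..<M3]"
    have "cyl (s@u) \<inter> Cl k0 = {}"
    proof (rule ccontr)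
      assume "cyl (s@u) \<inter> Cl k0 \<noteq> {}"
      then obtain f where f: "f \<in> cyl (s@u)" "f \<in> Cl k0" by blast
      have mM3: "m < M3" using M1 M2 M3 by simp
      have ft: "f i = t0 i" if "i < M3" for i
      proof -
        have il: "i < length (s@u)" using that mM3 by (simp add: u_def m_def)
        then have "f i = (s@u)!i" using f(1) unfolding cyl_def by auto
        also have "\<dots> = t0 i"
        proof (cases "i < m")
          case True then show ?thesis by (simp add: nth_append t0_def m_def)
        next
          case False then show ?thesis using that by (simp add: nth_append u_def m_def)
        qed
        finally show ?thesis .
      qed
      have kk: "k0 \<le> k" "k0 \<le> k'" by (simp_all add: k_def k'_def)
      have "\<forall>k\<ge>k0. \<forall>k'\<ge>k0. \<exists>a\<in>P k. \<exists>b\<in>P k'. norm (S f a - S f b) \<le> \<delta>/2"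
        using f(2) unfolding Cl_def by simp
      then have "\<exists>a\<in>P k. \<exists>b\<in>P k'. norm (S f a - S f b) \<le> \<delta>/2" using kk by blast
      then obtain a b where ab: "a \<in> P k" "b \<in> P k'" "norm (S f a - S f b) \<le> \<delta>/2"
        by blast
      have ma: "m \<le> a" using ab(1) P(1) unfolding k_def by fastforce
      have aM1: "a < M1" using ab(1) M1 by blast
      have M2b: "M2 \<le> b" using ab(2) P(1) unfolding k'_def by fastforce
      have bM3: "b < M3" using ab(2) M3 by blast
      have seteq: "{i. i \<le> b \<and> f i} = {i. i \<le> a \<and> f i} \<union> F"
      proof
        show "{i. i \<le> b \<and> f i} \<subseteq> {i. i \<le> a \<and> f i} \<union> F"
        proof
          fix i assume i: "i \<in> {i. i \<le> b \<and> f i}"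
          then have "t0 i" using ft[of i] bM3 by auto
          then show "i \<in> {i. i \<le> a \<and> f i} \<union> F" using i ma by (auto simp: t0_def split: if_splits)
        qed
      next
        show "{i. i \<le> a \<and> f i} \<union> F \<subseteq> {i. i \<le> b \<and> f i}"
        proof
          fix i assume i: "i \<in> {i. i \<le> a \<and> f i} \<union> F"
          then show "i \<in> {i. i \<le> b \<and> f i}"
          proof
            assume "i \<in> {i. i \<le> a \<and> f i}"
            then show ?thesis using aM1 M2 M2b by auto
          next
            assume iF: "i \<in> F"
            then have "i < M2" "M1 \<le> i" using M2 F(2) by auto
            then have "f i = t0 i" "t0 i" using ft[of i] iF M1 M2b bM3 by (auto simp: t0_def)
            then show ?thesis using \<open>i < M2\<close> M2b by auto
          qed
        qed
      qed
      have disj: "{i. i \<le> a \<and> f i} \<inter> F = {}" using aM1 F(2) by fastforce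
      have "S f b = S f a + (\<Sum>i\<in>F. x i)"
        unfolding S_def sumS seteq
        by (rule sum.union_disjoint) (use F(1) disj in auto)
      then have "S f a - S f b = - (\<Sum>i\<in>F. x i)" by (simp add: algebra_simps)
      then have "norm (S f a - S f b) = norm (\<Sum>i\<in>F. x i)" by simp
      then show False using ab(3) F(3) d(1) by simp
    qed
    then show "\<exists>u. cyl (s @ u) \<inter> Cl k0 = {}" by blast
  qed
  show ?thesis unfolding meager_iff
    by (intro exI[of _ "range Cl"]) (use sub av in auto)
qed

end
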